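(* Let $n\geq 2$ and let $k$ be a positive integer with $k+2^k-1\leq n$. For every positive integer $c$ with $n-2^k+1\leq c\leq (n-k-2^k+2)2^k-1$, there is an arithmetical structure $(r_1,\dots,r_n)$ on $K_n$ with $r_1=c$.
   Context: An arithmetical structure on the complete graph $K_n$ is an $n$-tuple $(r_1,r_2,\dots,r_n)$ of positive integers with $\gcd(r_1,\dots,r_n)=1$ such that $r_j$ divides $\sum_{i=1}^n r_i$ for every $j$. The entries are always listed so that $r_1\geq r_2\geq\dots\geq r_n$; thus $r_1$ is the largest value of the structure. *)

theory Defs
  imports Main
begin

text \<open>The tuple is represented by a function on the
  indices 1..n (values outside are irrelevant).\<close>

definition arith_structure_Kn :: "nat \<Rightarrow> (nat \<Rightarrow> nat) \<Rightarrow> bool" where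
  "arith_structure_Kn n r \<longleftrightarrow>
     (\<forall>i\<in>{1..n}. r i > 0) \<and>
     (\<forall>i\<in>{1..n}. \<forall>j\<in>{1..n}. i \<le> j \<longrightarrow> r j \<le> r i) \<and>
     Gcd (r ` {1..n}) = 1 \<and>
     (\<forall>j\<in>{1..n}. r j dvd (\<Sum>i=1..n. r i))"

end

theory Submission
  imports Defs "HOL-Library.Multiset"
begin

lemma suc_le_pow: "Suc m \<le> (2::nat)^m"
  by (induction m) auto

lemma half_bound:
  fixes N a p :: nat
  assumes "a < p" "p \<le> N"
  shows "N + 2^a \<le> (N - p + 1) * 2^p"
proof -
  obtain t where t: "p = Suc t" using assms by (cases p) auto
  have "2^a \<le> (2::nat)^t" using assms t by (intro power_increasing) auto
  moreover have "Suc t \<le> (2::nat)^t" by (rule suc_le_pow)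
  moreover have "(N - p) \<le> (N - p) * 2^p" by simp
  moreover have "(N - p + 1) * 2^p = (N-p)*2^p + 2 * 2^t" using t by simp
  ultimately show ?thesis using assms t by linarith
qed

lemma rep:
  fixes N V q :: nat
  assumes "1 \<le> N" "N \<le> V" "V < (N - min N q + 1) * 2^(min N q)"
  shows "\<exists>ys. length ys = N \<and> (\<forall>y\<in>set ys. \<exists>i\<le>q. y = 2^i) \<and> 1 \<in> set ys \<and> sum_list ys = V"
  using assms
proof (induction N arbitrary: V)
  case 0 then show ?case by simp
next
  case (Suc N)
  show ?case
  proof (cases "N = 0")
    case True
    then have "V = 1" using Suc.prems by (cases q) auto
    then show ?thesis using True by (intro exI[of _ "[1]"]) auto
  next
    case False
    hence N1: "1 \<le> N" by simp
    define x where "x = V - N"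
    have x1: "x \<ge> 1" using Suc.prems x_def by simp
    have key: "\<exists>a\<le>q. 2^a \<le> x \<and> V - 2^a < (N - min N q + 1)*2^(min N q)"
    proof (cases "2^q \<le> x")
      case True
      show ?thesis
      proof (cases "q \<le> N")
        case qN: True
        have "V < (N - q + 1) * 2^q + 2^q"
          using Suc.prems(3) qN by (simp add: Suc_diff_le algebra_simps)
        then show ?thesis using True qN by (intro exI[of _ q]) auto
      next
        case False
        hence "min (Suc N) q = Suc N" by simp
        hence "V < 2^(Suc N)" using Suc.prems(3) by simp
        moreover have "(2::nat)^(Suc N) \<le> 2^q" using False by (intro power_increasing) auto
        ultimately show ?thesis using True x_def by linarith
      qed
    next
      case False
      obtain a where a: "2^a \<le> x" "x < 2^(a+1)" using ex_power_ivl1[of 2 x] x1 by auto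
      have aq: "a < q"
      proof (rule ccontr)
        assume "\<not> a < q"
        hence "(2::nat)^q \<le> 2^a" by (intro power_increasing) auto
        thus False using a False by linarith
      qed
      have V1: "V - 2^a < N + 2^a" using a x_def Suc.prems by simp
      show ?thesis
      proof (cases "q \<le> N")
        case qN: True
        have "N + 2^a \<le> (N - q + 1) * 2^q" using half_bound[OF aq qN] .
        then show ?thesis using qN V1 a aq by (intro exI[of _ a]) auto
      next
        case qN: False
        hence "min (Suc N) q = Suc N" by simp
        hence "V < 2^(Suc N)" using Suc.prems(3) by simp
        have aN: "a \<le> N"
        proof (rule ccontr)
          assume "\<not> a \<le> N"
          hence "(2::nat)^(Suc N) \<le> 2^a" by (intro power_increasing) auto
          thus False using a \<open>V < 2^(Suc N)\<close> x_def by linarith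
        qed
        have "V - 2^a < 2^N"
        proof (cases "a = N")
          case True then show ?thesis using \<open>V < 2^(Suc N)\<close> by simp
        next
          case False
          hence "N + 2^a \<le> (N - N + 1) * 2^N" using half_bound[of a N N] aN by simp
          then show ?thesis using V1 by simp
        qed
        then show ?thesis using qN a aq by (intro exI[of _ a]) auto
      qed
    qed
    then obtain a where a: "a \<le> q" "2^a \<le> x" "V - 2^a < (N - min N q + 1)*2^(min N q)" by blast
    have "N \<le> V - 2^a" using a x_def Suc.prems by linarith
    from Suc.IH[OF N1 this a(3)] obtain ys where ys:
      "length ys = N" "\<forall>y\<in>set ys. \<exists>i\<le>q. y = 2^i" "1 \<in> set ys" "sum_list ys = V - 2^a" by blast
    have "2^a \<le> V" using a x_def by linarith
    then show ?thesis
      using ys a by (intro exI[of _ "2^a # ys"]) auto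
  qed
qed

lemma list_struct:
  fixes xs :: "nat list"
  assumes "length xs = n" "\<forall>x\<in>set xs. 0<x \<and> x dvd sum_list xs" "sorted_wrt (\<ge>) xs" "1 \<in> set xs"
  shows "arith_structure_Kn n (\<lambda>i. xs ! (i - 1))"
proof -
  have img: "(\<lambda>i. xs ! (i - 1)) ` {1..n} = set xs"
  proof -
    have "{1..n} = Suc ` {..<n}" by (auto simp: image_iff) (metis Suc_pred' lessThan_iff less_Suc_eq_le less_eq_Suc_le not_gr0 not_less0 not_less_eq_eq)
    hence "(\<lambda>i. xs ! (i - 1)) ` {1..n} = (\<lambda>i. xs ! i) ` {..<n}" by (simp add: image_image)
    also have "\<dots> = set xs" using assms(1) by (auto simp: set_conv_nth)
    finally show ?thesis .
  qed
  have sm: "(\<Sum>i=1..n. xs ! (i - 1)) = sum_list xs"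
  proof -
    have "(\<Sum>i=1..n. xs ! (i - 1)) = (\<Sum>i<n. xs ! i)"
      by (induction n) (auto simp: sum.atLeast_Suc_atMost)
    also have "\<dots> = sum_list xs" using assms(1) by (simp add: sum_list_sum_nth atLeast0LessThan)
    finally show ?thesis .
  qed
  have mem: "\<And>i. i \<in> {1..n} \<Longrightarrow> xs ! (i - 1) \<in> set xs" using assms(1) by auto
  have ord: "\<And>i j. i \<in> {1..n} \<Longrightarrow> j \<in> {1..n} \<Longrightarrow> i \<le> j \<Longrightarrow> xs ! (j - 1) \<le> xs ! (i - 1)"
  proof -
    fix i j assume ij: "i \<in> {1..n}" "j \<in> {1..n}" "i \<le> j"
    show "xs ! (j - 1) \<le> xs ! (i - 1)"
    proof (cases "i = j")
      case True then show ?thesis by simp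
    next
      case False
      then show ?thesis using sorted_wrt_nth_less[OF assms(3), of "i - 1" "j - 1"] ij assms(1) by auto
    qed
  qed
  have g: "Gcd (set xs) = 1" using assms(4) by (metis Gcd_dvd nat_dvd_1_iff_1)
  show ?thesis unfolding arith_structure_Kn_def
    using mem ord img sm g assms(2) by auto
qed

theorem proposition2p4:
  fixes n k c :: nat
  assumes "n \<ge> 2" and "k \<ge> 1" and "k + 2 ^ k - 1 \<le> n"
    and "c \<ge> 1"
    and "int n - 2 ^ k + 1 \<le> int c"
    and "int c \<le> (int n - int k - 2 ^ k + 2) * 2 ^ k - 1"
  shows "\<exists>r. arith_structure_Kn n r \<and> r 1 = c"
proof -
  define N where "N = n + 1 - 2^k"
  have pk: "k \<le> 2^k - 1" using suc_le_pow[of k] by simp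
  have kN: "k \<le> N" using assms(3) pk N_def by simp
  have N1: "1 \<le> N" using kN assms(2) by simp
  have mn: "min N k = k" using kN by simp
  have p2: "int (2^k) = (2::int)^k" by simp
  have le2: "2^k \<le> n + 1" using assms(3) pk by linarith
  have "int N = int n + 1 - int (2^k)" using N_def le2 by simp
  hence cN: "N \<le> c" using assms(5) p2 by linarith
  have e1: "int (N - k + 1) = int n - int k - 2 ^ k + 2" using kN \<open>int N = int n + 1 - int (2^k)\<close> p2 by simp
  have "int c < int (N - k + 1) * 2 ^ k" unfolding e1 using assms(6) by linarith
  hence "c < (N - k + 1) * 2 ^ k" by (metis of_nat_less_iff of_nat_mult of_nat_numeral of_nat_power)
  hence "c < (N - min N k + 1) * 2 ^ (min N k)" using mn by simp
  from rep[OF N1 cN this] obtain ys where ys: "length ys = N" "\<forall>y\<in>set ys. \<exists>i\<le>k. y = 2^i"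
    "1 \<in> set ys" "sum_list ys = c" by blast
  define xs where "xs = replicate (2^k - 1) c @ rev (sort ys)"
  have len: "length xs = n" using ys(1) N_def xs_def assms(3) pk by simp
  have "sum_list (sort ys) = sum_list ys" by (metis mset_sort sum_mset_sum_list)
  hence sl: "sum_list xs = 2^k * c" using ys(4) xs_def
  proof -
    have g1: "(1::nat) \<le> 2^k" by simp
    have "sum_list xs = (2^k - 1) * c + c" using ys(4) xs_def \<open>sum_list (sort ys) = sum_list ys\<close>
      by (simp add: sum_list_replicate)
    also have "\<dots> = 2^k * c" using g1 by (simp add: diff_mult_distrib)
    finally show ?thesis .
  qed
  have yc: "\<forall>y\<in>set ys. y \<le> c" using ys(4) member_le_sum_list[where ?xs = ys] by auto
  have dv: "\<forall>x\<in>set xs. 0<x \<and> x dvd sum_list xs"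
  proof
    fix x assume "x \<in> set xs"
    hence "x = c \<or> x \<in> set ys" using xs_def by (auto split: if_splits)
    then show "0<x \<and> x dvd sum_list xs"
    proof
      assume "x = c" then show ?thesis using sl assms(4) by simp
    next
      assume "x \<in> set ys"
      then obtain i where i: "i \<le> k" "x = 2^i" using ys(2) by blast
      have "(2::nat)^i dvd 2^k" using i by (simp add: le_imp_power_dvd)
      then show ?thesis using i sl by simp
    qed
  qed
  have srt: "sorted_wrt (\<ge>) xs"
  proof -
    have r1: "sorted_wrt (\<ge>) (replicate (2^k - 1) c)" by (simp add: sorted_wrt_iff_nth_less)
    have r2: "sorted_wrt (\<ge>) (rev (sort ys))" by (simp add: sorted_wrt_rev)
    show ?thesis unfolding xs_def using yc r1 r2 by (auto simp: sorted_wrt_append)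
  qed
  have one: "1 \<in> set xs" using ys(3) xs_def by simp
  have "0 < 2^k - (1::nat)" using pk assms(2) by linarith
  hence "xs ! 0 = c" using xs_def by (simp add: nth_append)
  then show ?thesis using list_struct[OF len dv srt one] by (intro exI[of _ "\<lambda>i. xs ! (i - 1)"]) simp
qed

end
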